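(* For every integer $t \geq 1$, there exists a connected non-bipartite graph whose adjacency matrix has exactly five distinct eigenvalues and which has exactly $t$ distinct valencies (vertex degrees).
   Context: Eigenvalues of a graph are the eigenvalues of its adjacency matrix. Graphs are finite, simple and undirected. *)

theory Defs
  imports "Jordan_Normal_Form.Char_Poly"
begin

text \<open>A finite simple graph on vertex set {0..<n}, given by an edge relation E
 (only its restriction to {0..<n} matters).\<close>

definition simple_graph :: "nat \<Rightarrow> (nat \<Rightarrow> nat \<Rightarrow> bool) \<Rightarrow> bool" where
  "simple_graph n E \<longleftrightarrow> (\<forall>u<n. \<forall>v<n. E u v \<longleftrightarrow> E v u) \<and> (\<forall>u<n. \<not> E u u)"

definition adj_matrix :: "nat \<Rightarrow> (nat \<Rightarrow> nat \<Rightarrow> bool) \<Rightarrow> real mat" where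
  "adj_matrix n E = mat n n (\<lambda>(i, j). if E i j then 1 else 0)"

definition graph_eigenvalues :: "nat \<Rightarrow> (nat \<Rightarrow> nat \<Rightarrow> bool) \<Rightarrow> real set" where
  "graph_eigenvalues n E = {k. eigenvalue (adj_matrix n E) k}"

definition degree :: "nat \<Rightarrow> (nat \<Rightarrow> nat \<Rightarrow> bool) \<Rightarrow> nat \<Rightarrow> nat" where
  "degree n E u = card {v. v < n \<and> E u v}"

definition valencies :: "nat \<Rightarrow> (nat \<Rightarrow> nat \<Rightarrow> bool) \<Rightarrow> nat set" where
  "valencies n E = degree n E ` {0..<n}"

definition connected_graph :: "nat \<Rightarrow> (nat \<Rightarrow> nat \<Rightarrow> bool) \<Rightarrow> bool" where
  "connected_graph n E \<longleftrightarrow> n > 0 \<and>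
     (\<forall>u<n. \<forall>v<n. (\<lambda>x y. x < n \<and> y < n \<and> E x y)\<^sup>*\<^sup>* u v)"

definition bipartite :: "nat \<Rightarrow> (nat \<Rightarrow> nat \<Rightarrow> bool) \<Rightarrow> bool" where
  "bipartite n E \<longleftrightarrow> (\<exists>c :: nat \<Rightarrow> bool. \<forall>u<n. \<forall>v<n. E u v \<longrightarrow> c u \<noteq> c v)"

end

theory Submission
  imports Defs
begin

lemma adj_mult:
  assumes "v \<in> carrier_vec n" "i < n"
  shows "(adj_matrix n E *\<^sub>v v) $ i = (\<Sum>j\<in>{j. j < n \<and> E i j}. v $ j)"
proof -
  have "(adj_matrix n E *\<^sub>v v) $ i = (\<Sum>j<n. (if E i j then 1 else 0) * v $ j)"
    using assms by (simp add: adj_matrix_def mult_mat_vec_def scalar_prod_def row_def lessThan_atLeast0)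
  also have "\<dots> = (\<Sum>j<n. if E i j then v $ j else 0)"
    by (rule sum.cong) auto
  also have "\<dots> = (\<Sum>j\<in>{j. j < n \<and> E i j}. v $ j)"
    using sum.inter_filter[of "{..<n}" "\<lambda>j. v $ j" "E i"] by simp
  finally show ?thesis .
qed

definition Eof :: "nat \<Rightarrow> (nat \<Rightarrow> 'a) \<Rightarrow> ('a \<Rightarrow> 'a \<Rightarrow> bool) \<Rightarrow> nat \<Rightarrow> nat \<Rightarrow> bool" where
  "Eof n g R u v \<longleftrightarrow> u < n \<and> v < n \<and> R (g u) (g v)"

lemma sum_transfer:
  assumes bij: "bij_betw g {0..<n} V" and i: "i < n"
  shows "(\<Sum>j\<in>{j. j < n \<and> Eof n g R i j}. h j) = (\<Sum>z\<in>{z\<in>V. R (g i) z}. h (inv_into {0..<n} g z))"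
proof -
  let ?S = "{j. j < n \<and> Eof n g R i j}"
  have inj: "inj_on g ?S" using bij unfolding bij_betw_def by (auto intro: inj_on_subset)
  have img: "g ` ?S = {z\<in>V. R (g i) z}"
  proof
    show "g ` ?S \<subseteq> {z\<in>V. R (g i) z}" using bij i unfolding bij_betw_def Eof_def by auto
    show "{z\<in>V. R (g i) z} \<subseteq> g ` ?S"
    proof
      fix z assume z: "z \<in> {z\<in>V. R (g i) z}"
      then obtain j where j: "j < n" "z = g j" using bij unfolding bij_betw_def by (metis (no_types, lifting) atLeastLessThan_iff imageE mem_Collect_eq)
      then show "z \<in> g ` ?S" using z i unfolding Eof_def by auto
    qed
  qed
  have "(\<Sum>z\<in>{z\<in>V. R (g i) z}. h (inv_into {0..<n} g z)) = (\<Sum>j\<in>?S. h (inv_into {0..<n} g (g j)))"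
    by (subst img[symmetric], rule sum.reindex[OF inj, unfolded comp_def])
  also have "\<dots> = (\<Sum>j\<in>?S. h j)"
    by (rule sum.cong) (use bij in \<open>auto simp: bij_betw_def inv_into_f_f\<close>)
  finally show ?thesis by simp
qed

lemma eig_char:
  assumes bij: "bij_betw g {0..<n} V"
  shows "eigenvalue (adj_matrix n (Eof n g R)) k \<longleftrightarrow>
    (\<exists>f. (\<exists>y\<in>V. f y \<noteq> 0) \<and> (\<forall>y\<in>V. (\<Sum>z\<in>{z\<in>V. R y z}. f z) = k * f y))"
proof
  have dim: "dim_row (adj_matrix n (Eof n g R)) = n" by (simp add: adj_matrix_def)
  assume "eigenvalue (adj_matrix n (Eof n g R)) k"
  then obtain v where v: "v \<in> carrier_vec n" "v \<noteq> 0\<^sub>v n" "adj_matrix n (Eof n g R) *\<^sub>v v = k \<cdot>\<^sub>v v"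
    unfolding eigenvalue_def eigenvector_def dim by auto
  define f where "f z = v $ inv_into {0..<n} g z" for z
  have gi: "\<And>i. i < n \<Longrightarrow> inv_into {0..<n} g (g i) = i" using bij by (auto simp: bij_betw_def inv_into_f_f)
  have eq: "\<And>i. i < n \<Longrightarrow> (\<Sum>z\<in>{z\<in>V. R (g i) z}. f z) = k * f (g i)"
  proof -
    fix i assume i: "i < n"
    have "(adj_matrix n (Eof n g R) *\<^sub>v v) $ i = (k \<cdot>\<^sub>v v) $ i" using v by simp
    then have "(\<Sum>j\<in>{j. j < n \<and> Eof n g R i j}. v $ j) = k * v $ i"
      using adj_mult[OF v(1) i] v(1) i by simp
    then show "(\<Sum>z\<in>{z\<in>V. R (g i) z}. f z) = k * f (g i)"
      unfolding f_def sum_transfer[OF bij i] gi[OF i] .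
  qed
  show "\<exists>f. (\<exists>y\<in>V. f y \<noteq> 0) \<and> (\<forall>y\<in>V. (\<Sum>z\<in>{z\<in>V. R y z}. f z) = k * f y)"
  proof (intro exI conjI ballI)
    obtain i where i: "i < n" "v $ i \<noteq> 0" using v(1,2) by (metis carrier_vecD eq_vecI index_zero_vec(1,2))
    show "\<exists>y\<in>V. f y \<noteq> 0"
      using i bij by (intro bexI[of _ "g i"]) (auto simp: f_def gi bij_betw_def)
  next
    fix y assume y: "y \<in> V"
    then obtain i where i: "i < n" "y = g i" using bij unfolding bij_betw_def by (metis atLeastLessThan_iff imageE)
    show "(\<Sum>z\<in>{z\<in>V. R y z}. f z) = k * f y" using eq[OF i(1)] i(2) by simp
  qed
next
  assume "\<exists>f. (\<exists>y\<in>V. f y \<noteq> 0) \<and> (\<forall>y\<in>V. (\<Sum>z\<in>{z\<in>V. R y z}. f z) = k * f y)"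
  then obtain f where f: "\<exists>y\<in>V. f y \<noteq> 0" "\<And>y. y \<in> V \<Longrightarrow> (\<Sum>z\<in>{z\<in>V. R y z}. f z) = k * f y" by blast
  define v where "v = vec n (\<lambda>i. f (g i))"
  have vc: "v \<in> carrier_vec n" by (simp add: v_def)
  have fg: "\<And>z. z \<in> V \<Longrightarrow> g (inv_into {0..<n} g z) = z" using bij by (auto simp: bij_betw_def f_inv_into_f)
  have invl: "\<And>z. z \<in> V \<Longrightarrow> inv_into {0..<n} g z < n" using bij
    by (metis atLeastLessThan_iff bij_betw_def inv_into_into)
  have "v \<noteq> 0\<^sub>v n"
  proof
    assume v0: "v = 0\<^sub>v n"
    obtain y where y: "y \<in> V" "f y \<noteq> 0" using f(1) by blast
    have "v $ (inv_into {0..<n} g y) = f y" using invl[OF y(1)] fg[OF y(1)] by (simp add: v_def)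
    then show False using v0 y invl[OF y(1)] by simp
  qed
  moreover have "adj_matrix n (Eof n g R) *\<^sub>v v = k \<cdot>\<^sub>v v"
  proof (rule eq_vecI)
    fix i assume "i < dim_vec (k \<cdot>\<^sub>v v)"
    then have i: "i < n" by (simp add: v_def)
    have gV: "g i \<in> V" using bij i unfolding bij_betw_def by auto
    have "(adj_matrix n (Eof n g R) *\<^sub>v v) $ i = (\<Sum>z\<in>{z\<in>V. R (g i) z}. v $ (inv_into {0..<n} g z))"
      using adj_mult[OF vc i] sum_transfer[OF bij i] by simp
    also have "\<dots> = (\<Sum>z\<in>{z\<in>V. R (g i) z}. f z)"
      by (rule sum.cong) (auto simp: v_def invl fg)
    also have "\<dots> = k * f (g i)" using f(2)[OF gV] .
    finally show "(adj_matrix n (Eof n g R) *\<^sub>v v) $ i = (k \<cdot>\<^sub>v v) $ i" using i by (simp add: v_def)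
  next
    show "dim_vec (adj_matrix n (Eof n g R) *\<^sub>v v) = dim_vec (k \<cdot>\<^sub>v v)" by (simp add: adj_matrix_def v_def)
  qed
  ultimately show "eigenvalue (adj_matrix n (Eof n g R)) k"
    unfolding eigenvalue_def eigenvector_def using vc by (auto simp: adj_matrix_def)
qed

lemma deg_Eof:
  assumes bij: "bij_betw g {0..<n} V" and u: "u < n"
  shows "degree n (Eof n g R) u = card {z\<in>V. R (g u) z}"
proof -
  let ?S = "{v. v < n \<and> Eof n g R u v}"
  have inj: "inj_on g ?S" using bij unfolding bij_betw_def by (auto intro: inj_on_subset)
  have img: "g ` ?S = {z\<in>V. R (g u) z}"
  proof
    show "g ` ?S \<subseteq> {z\<in>V. R (g u) z}" using bij u unfolding bij_betw_def Eof_def by auto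
    show "{z\<in>V. R (g u) z} \<subseteq> g ` ?S"
    proof
      fix z assume z: "z \<in> {z\<in>V. R (g u) z}"
      then obtain j where j: "j < n" "z = g j" using bij unfolding bij_betw_def by (metis (no_types, lifting) atLeastLessThan_iff imageE mem_Collect_eq)
      then show "z \<in> g ` ?S" using z u unfolding Eof_def by auto
    qed
  qed
  show ?thesis unfolding degree_def using card_image[OF inj] img by simp
qed

lemma val_Eof:
  assumes bij: "bij_betw g {0..<n} V"
  shows "valencies n (Eof n g R) = (\<lambda>y. card {z\<in>V. R y z}) ` V"
proof -
  have "valencies n (Eof n g R) = (\<lambda>u. card {z\<in>V. R (g u) z}) ` {0..<n}"
    unfolding valencies_def using deg_Eof[OF bij] by (auto intro!: image_cong)
  also have "\<dots> = (\<lambda>y. card {z\<in>V. R y z}) ` (g ` {0..<n})" by (simp add: image_image)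
  also have "g ` {0..<n} = V" using bij by (simp add: bij_betw_def)
  finally show ?thesis .
qed

lemma simple_Eof:
  assumes "\<And>y z. R y z \<Longrightarrow> R z y" "\<And>y. \<not> R y y"
  shows "simple_graph n (Eof n g R)"
  using assms unfolding simple_graph_def Eof_def by blast

lemma conn_Eof:
  assumes bij: "bij_betw g {0..<n} V" and n: "n > 0"
    and c: "\<And>y z. y \<in> V \<Longrightarrow> z \<in> V \<Longrightarrow> y \<noteq> z \<Longrightarrow> R y z \<or> (\<exists>w\<in>V. R y w \<and> R w z)"
  shows "connected_graph n (Eof n g R)"
  unfolding connected_graph_def
proof (intro conjI n allI impI)
  fix u v assume u: "u < n" and v: "v < n"
  let ?r = "\<lambda>x y. x < n \<and> y < n \<and> Eof n g R x y"
  have gu: "g u \<in> V" "g v \<in> V" using bij u v unfolding bij_betw_def by auto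
  show "?r\<^sup>*\<^sup>* u v"
  proof (cases "u = v")
    case True then show ?thesis by simp
  next
    case False
    then have ne: "g u \<noteq> g v" using bij u v unfolding bij_betw_def inj_on_def by auto
    from c[OF gu ne] show ?thesis
    proof
      assume "R (g u) (g v)"
      then show ?thesis using u v by (intro r_into_rtranclp) (simp add: Eof_def)
    next
      assume "\<exists>w\<in>V. R (g u) w \<and> R w (g v)"
      then obtain w where w: "w \<in> V" "R (g u) w" "R w (g v)" by blast
      define j where "j = inv_into {0..<n} g w"
      have j: "j < n" "g j = w" using bij w(1) unfolding j_def bij_betw_def
        by (auto simp: f_inv_into_f)
      have 1: "?r u j" and 2: "?r j v" using u v j w by (auto simp: Eof_def)
      show ?thesis using rtranclp.rtrancl_into_rtrancl[OF r_into_rtranclp[of ?r, OF 1] 2] .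
    qed
  qed
qed

lemma nonbip_Eof:
  assumes bij: "bij_betw g {0..<n} V" and abc: "a \<in> V" "b \<in> V" "d \<in> V" "R a b" "R b d" "R a d"
  shows "\<not> bipartite n (Eof n g R)"
proof
  assume "bipartite n (Eof n g R)"
  then obtain col :: "nat \<Rightarrow> bool" where col: "\<forall>u<n. \<forall>v<n. Eof n g R u v \<longrightarrow> col u \<noteq> col v"
    unfolding bipartite_def by blast
  have "\<exists>i<n. g i = a" "\<exists>i<n. g i = b" "\<exists>i<n. g i = d" using bij abc unfolding bij_betw_def
    by (metis atLeastLessThan_iff imageE)+
  then obtain ia ib id where "ia < n" "ib < n" "id < n" "g ia = a" "g ib = b" "g id = d" by blast
  then show False using col abc unfolding Eof_def by metis
qed


locale famB =
  fixes k :: nat and p q :: "nat \<Rightarrow> nat" and c :: nat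
  assumes k2: "k \<ge> 2" and pq: "\<And>j. j < k \<Longrightarrow> p j * q j = c"
    and p0: "p 0 = 1" and q0: "q 0 = c" and pk: "p (k-1) = c" and qk: "q (k-1) = 1" and c2: "c \<ge> 2"
begin

definition sz :: "nat \<Rightarrow> bool \<Rightarrow> nat" where "sz j b = (if b then p j else q j)"
definition VB :: "(nat \<times> bool \<times> nat) set" where "VB = (SIGMA j:{..<k}. SIGMA b:UNIV. {..<sz j b})"
definition RB :: "nat \<times> bool \<times> nat \<Rightarrow> nat \<times> bool \<times> nat \<Rightarrow> bool" where
  "RB y z \<longleftrightarrow> y \<noteq> z \<and> (fst y = fst z \<longrightarrow> fst (snd y) = fst (snd z))"
definition NB :: nat where "NB = (\<Sum>j<k. p j + q j)"

lemma memV: "(j,b,i) \<in> VB \<longleftrightarrow> j < k \<and> i < sz j b" by (simp add: VB_def)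

lemma finV: "finite VB" unfolding VB_def by (intro finite_SigmaI) auto

lemma pos: "j < k \<Longrightarrow> p j \<ge> 1 \<and> q j \<ge> 1"
  using pq[of j] c2 by (metis One_nat_def less_one mult_is_0 not_le not_numeral_le_zero)

lemma pk': "p (k - Suc 0) = c" using pk by simp
lemma qk': "q (k - Suc 0) = 1" using qk by simp

lemma pqr: "j < k \<Longrightarrow> real (p j) * real (q j) = real c"
  using pq by (metis of_nat_mult)

lemma sumV: "(\<Sum>y\<in>VB. f y) = (\<Sum>j<k. (\<Sum>i<p j. f (j,True,i)) + (\<Sum>i<q j. f (j,False,i)))"
proof -
  have "(\<Sum>y\<in>VB. f y) = (\<Sum>j<k. \<Sum>x\<in>(SIGMA b:UNIV. {..<sz j b}). f (j,x))"
    unfolding VB_def by (subst sum.Sigma) (auto simp: split_def)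
  also have "\<dots> = (\<Sum>j<k. \<Sum>b\<in>UNIV. \<Sum>i<sz j b. f (j,b,i))"
    by (rule sum.cong[OF refl], subst sum.Sigma) (auto simp: split_def)
  also have "\<dots> = (\<Sum>j<k. (\<Sum>i<p j. f (j,True,i)) + (\<Sum>i<q j. f (j,False,i)))"
    by (simp add: UNIV_bool sz_def add.commute)
  finally show ?thesis .
qed

lemma cardV: "card VB = NB"
proof -
  have "card VB = (\<Sum>y\<in>VB. 1)" by simp
  also have "\<dots> = NB" unfolding sumV NB_def by simp
  finally show ?thesis .
qed

lemma nbr:
  assumes "(j,b,i) \<in> VB"
  shows "{z\<in>VB. RB (j,b,i) z} = VB - insert (j,b,i) ((\<lambda>i'. (j, \<not>b, i')) ` {..<sz j (\<not>b)})"
  using assms by (auto simp: RB_def memV)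

lemma opp_sub: "(j,b,i) \<in> VB \<Longrightarrow> insert (j,b,i) ((\<lambda>i'. (j, \<not>b, i')) ` {..<sz j (\<not>b)}) \<subseteq> VB"
  by (auto simp: memV)

lemma sum_nbr:
  fixes f :: "nat \<times> bool \<times> nat \<Rightarrow> real"
  assumes y: "(j,b,i) \<in> VB"
  shows "(\<Sum>z\<in>{z\<in>VB. RB (j,b,i) z}. f z) = (\<Sum>z\<in>VB. f z) - f (j,b,i) - (\<Sum>i'<sz j (\<not>b). f (j,\<not>b,i'))"
proof -
  let ?O = "(\<lambda>i'. (j, \<not>b, i')) ` {..<sz j (\<not>b)}"
  have "(\<Sum>z\<in>{z\<in>VB. RB (j,b,i) z}. f z) = (\<Sum>z\<in>VB. f z) - (\<Sum>z\<in>insert (j,b,i) ?O. f z)"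
    unfolding nbr[OF y] by (rule sum_diff[OF finV opp_sub[OF y]])
  also have "(\<Sum>z\<in>insert (j,b,i) ?O. f z) = f (j,b,i) + (\<Sum>z\<in>?O. f z)"
    by (rule sum.insert) auto
  also have "(\<Sum>z\<in>?O. f z) = (\<Sum>i'<sz j (\<not>b). f (j,\<not>b,i'))"
    by (subst sum.reindex) (auto simp: inj_on_def)
  finally show ?thesis by simp
qed

lemma card_nbr:
  assumes y: "(j,b,i) \<in> VB"
  shows "card {z\<in>VB. RB (j,b,i) z} = NB - 1 - sz j (\<not>b)"
proof -
  let ?O = "(\<lambda>i'. (j, \<not>b, i')) ` {..<sz j (\<not>b)}"
  have "card {z\<in>VB. RB (j,b,i) z} = card VB - card (insert (j,b,i) ?O)"
    unfolding nbr[OF y] by (rule card_Diff_subset) (use finV opp_sub[OF y] in \<open>auto intro: finite_subset\<close>)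
  also have "card (insert (j,b,i) ?O) = 1 + sz j (\<not>b)"
    by (subst card_insert_disjoint) (auto simp: card_image inj_on_def)
  finally show ?thesis using cardV by simp
qed


lemma upper:
  fixes f :: "nat \<times> bool \<times> nat \<Rightarrow> real" and lam :: real
  assumes nz: "\<exists>y\<in>VB. f y \<noteq> 0" and eq: "\<forall>y\<in>VB. (\<Sum>z\<in>{z\<in>VB. RB y z}. f z) = lam * f y"
  shows "lam = -1 \<or> (lam+1)^2 = real c \<or> (lam+1)^2 - real NB*(lam+1) + (2*real k-1)*real c = 0"
proof (rule ccontr)
  assume H: "\<not> ?thesis"
  define \<mu> where "\<mu> = lam + 1"
  define \<sigma> where "\<sigma> = (\<Sum>y\<in>VB. f y)"
  define X where "X j = (\<Sum>i<p j. f (j,True,i))" for j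
  define Y where "Y j = (\<Sum>i<q j. f (j,False,i))" for j
  have m0: "\<mu> \<noteq> 0" and mc: "\<mu>^2 - c \<noteq> 0" and rt: "\<mu>^2 - real NB*\<mu> + (2*real k-1)*real c \<noteq> 0"
    using H unfolding \<mu>_def by auto
  have sig: "\<sigma> = (\<Sum>j<k. X j + Y j)" unfolding \<sigma>_def X_def Y_def by (rule sumV)
  have eT: "\<mu> * f (j,True,i) = \<sigma> - Y j" if "j < k" "i < p j" for j i
  proof -
    have y: "(j,True,i) \<in> VB" using that by (simp add: memV sz_def)
    have "\<sigma> - f (j,True,i) - Y j = lam * f (j,True,i)"
      using eq[rule_format, OF y] sum_nbr[OF y, of f] by (simp add: \<sigma>_def Y_def sz_def)
    then show ?thesis unfolding \<mu>_def by (simp add: algebra_simps)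
  qed
  have eF: "\<mu> * f (j,False,i) = \<sigma> - X j" if "j < k" "i < q j" for j i
  proof -
    have y: "(j,False,i) \<in> VB" using that by (simp add: memV sz_def)
    have "\<sigma> - f (j,False,i) - X j = lam * f (j,False,i)"
      using eq[rule_format, OF y] sum_nbr[OF y, of f] by (simp add: \<sigma>_def X_def sz_def)
    then show ?thesis unfolding \<mu>_def by (simp add: algebra_simps)
  qed
  have A: "\<mu> * X j = p j * (\<sigma> - Y j)" if "j < k" for j
  proof -
    have "\<mu> * X j = (\<Sum>i<p j. \<mu> * f (j,True,i))" by (simp add: X_def sum_distrib_left)
    also have "\<dots> = (\<Sum>i<p j. \<sigma> - Y j)" by (rule sum.cong) (use eT that in auto)
    finally show ?thesis by simp
  qed
  have B: "\<mu> * Y j = q j * (\<sigma> - X j)" if "j < k" for j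
  proof -
    have "\<mu> * Y j = (\<Sum>i<q j. \<mu> * f (j,False,i))" by (simp add: Y_def sum_distrib_left)
    also have "\<dots> = (\<Sum>i<q j. \<sigma> - X j)" by (rule sum.cong) (use eF that in auto)
    finally show ?thesis by simp
  qed
  have XS: "X j * (\<mu>^2 - c) = \<sigma> * (p j * \<mu> - c)" if j: "j < k" for j
  proof -
    have "X j * (\<mu>^2 - c) = \<mu> * (\<mu> * X j) - c * X j" by (simp add: power2_eq_square algebra_simps)
    also have "\<dots> = \<mu> * (p j * (\<sigma> - Y j)) - c * X j" using A[OF j] by simp
    also have "\<dots> = p j * \<mu> * \<sigma> - p j * (\<mu> * Y j) - c * X j" by (simp add: algebra_simps)
    also have "\<dots> = p j * \<mu> * \<sigma> - p j * (q j * (\<sigma> - X j)) - c * X j" using B[OF j] by simp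
    also have "\<dots> = \<sigma> * (p j * \<mu>) - (real (p j) * real (q j)) * \<sigma> + (real (p j) * real (q j) - real c) * X j" by (simp add: algebra_simps)
    also have "\<dots> = \<sigma> * (p j * \<mu> - c)" using pqr[OF j] by (simp add: algebra_simps)
    finally show ?thesis .
  qed
  have YS: "Y j * (\<mu>^2 - c) = \<sigma> * (q j * \<mu> - c)" if j: "j < k" for j
  proof -
    have "Y j * (\<mu>^2 - c) = \<mu> * (\<mu> * Y j) - c * Y j" by (simp add: power2_eq_square algebra_simps)
    also have "\<dots> = \<mu> * (q j * (\<sigma> - X j)) - c * Y j" using B[OF j] by simp
    also have "\<dots> = q j * \<mu> * \<sigma> - q j * (\<mu> * X j) - c * Y j" by (simp add: algebra_simps)
    also have "\<dots> = q j * \<mu> * \<sigma> - q j * (p j * (\<sigma> - Y j)) - c * Y j" using A[OF j] by simp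
    also have "\<dots> = \<sigma> * (q j * \<mu>) - (real (p j) * real (q j)) * \<sigma> + (real (p j) * real (q j) - real c) * Y j" by (simp add: algebra_simps)
    also have "\<dots> = \<sigma> * (q j * \<mu> - c)" using pqr[OF j] by (simp add: algebra_simps)
    finally show ?thesis .
  qed
  have tot: "\<sigma> * (\<mu>^2 - c) = \<sigma> * (real NB * \<mu> - 2 * real k * c)"
  proof -
    have "\<sigma> * (\<mu>^2 - c) = (\<Sum>j<k. X j * (\<mu>^2 - c) + Y j * (\<mu>^2 - c))"
      unfolding sig sum_distrib_right by (simp add: distrib_right)
    also have "\<dots> = (\<Sum>j<k. \<sigma> * ((real (p j) + real (q j)) * \<mu> - 2 * c))"
      by (rule sum.cong[OF refl]) (simp add: XS YS; simp add: algebra_simps)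
    also have "\<dots> = \<sigma> * ((\<Sum>j<k. real (p j) + real (q j)) * \<mu> - 2 * real k * c)"
      by (simp add: sum_distrib_left sum_distrib_right sum_subtractf algebra_simps)
    also have "(\<Sum>j<k. real (p j) + real (q j)) = real NB" by (simp add: NB_def)
    finally show ?thesis .
  qed
  show False
  proof (cases "\<sigma> = 0")
    case True
    have "f y = 0" if y: "y \<in> VB" for y
    proof -
      obtain j b i where yy: "y = (j,b,i)" by (cases y) auto
      have j: "j < k" and i: "i < sz j b" using y yy by (auto simp: memV)
      show ?thesis
      proof (cases b)
        case True
        have "X j = 0" using XS[OF j] mc True \<open>\<sigma> = 0\<close> by simp
        have "Y j = 0" using YS[OF j] mc \<open>\<sigma> = 0\<close> by simp
        then show ?thesis using eT[OF j, of i] i True m0 yy \<open>\<sigma> = 0\<close> by (simp add: sz_def)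
      next
        case False
        have "X j = 0" using XS[OF j] mc \<open>\<sigma> = 0\<close> by simp
        then show ?thesis using eF[OF j, of i] i False m0 yy \<open>\<sigma> = 0\<close> by (simp add: sz_def)
      qed
    qed
    then show False using nz by blast
  next
    case False
    then have "\<mu>^2 - c = real NB * \<mu> - 2 * real k * c" using tot by simp
    then show False using rt by (simp add: algebra_simps)
  qed
qed


definition isev :: "real \<Rightarrow> bool" where
  "isev lam \<longleftrightarrow> (\<exists>f. (\<exists>y\<in>VB. f y \<noteq> 0) \<and> (\<forall>y\<in>VB. (\<Sum>z\<in>{z\<in>VB. RB y z}. f z) = lam * f y))"

lemma sum_nbr_const:
  fixes w :: "nat \<Rightarrow> bool \<Rightarrow> real"
  assumes y: "(j,b,i) \<in> VB"
  shows "(\<Sum>z\<in>{z\<in>VB. RB (j,b,i) z}. w (fst z) (fst (snd z))) =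
     (\<Sum>j'<k. p j' * w j' True + q j' * w j' False) - w j b - sz j (\<not>b) * w j (\<not>b)"
  by (simp add: sum_nbr[OF y] sumV)

lemma sum2:
  fixes h :: "nat \<Rightarrow> real"
  assumes "\<And>j. j < k \<Longrightarrow> j \<noteq> 0 \<Longrightarrow> j \<noteq> k-1 \<Longrightarrow> h j = 0"
  shows "(\<Sum>j<k. h j) = h 0 + h (k-1)"
proof -
  have "(\<Sum>j<k. h j) = (\<Sum>j\<in>{0,k-1}. h j)"
    by (rule sum.mono_neutral_right) (use assms k2 in auto)
  also have "\<dots> = h 0 + h (k-1)" using k2 by simp
  finally show ?thesis .
qed

lemma ev_m1: "isev (-1)"
proof -
  define a where "a = (0::nat, False, 0::nat)"
  define b' where "b' = (0::nat, False, 1::nat)"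
  define f :: "nat \<times> bool \<times> nat \<Rightarrow> real" where "f y = (if y = a then 1 else 0) - (if y = b' then 1 else 0)" for y
  have k0: "0 < k" using k2 by simp
  have aV: "a \<in> VB" and bV: "b' \<in> VB" using k0 c2 by (auto simp: a_def b'_def memV sz_def q0)
  have ab: "a \<noteq> b'" by (simp add: a_def b'_def)
  have S: "(\<Sum>z\<in>VB. f z) = 0" unfolding f_def using aV bV finV by (simp add: sum_subtractf)
  have O: "(\<Sum>i'<sz j (\<not>bb). f (j,\<not>bb,i')) = 0" for j bb
  proof (cases "j = 0 \<and> bb")
    case True
    then show ?thesis using c2 by (simp add: f_def a_def b'_def sz_def q0 sum_subtractf)
  next
    case False
    then have "\<And>i'. f (j,\<not>bb,i') = 0" by (auto simp: f_def a_def b'_def)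
    then show ?thesis by simp
  qed
  show ?thesis unfolding isev_def
  proof (intro exI conjI ballI)
    show "\<exists>y\<in>VB. f y \<noteq> 0" using aV ab by (intro bexI[of _ a]) (auto simp: f_def)
  next
    fix y assume y: "y \<in> VB"
    obtain j bb i where yy: "y = (j,bb,i)" by (cases y) auto
    show "(\<Sum>z\<in>{z\<in>VB. RB y z}. f z) = -1 * f y"
      using sum_nbr[of j bb i f] y yy S O by simp
  qed
qed

lemma ev_pm:
  fixes s' :: real
  assumes s': "s'^2 = real c"
  shows "isev (s' - 1)"
proof -
  define w :: "nat \<Rightarrow> bool \<Rightarrow> real" where
    "w j b = (if j = 0 then (if b then s' else -1) else if j = k-1 then (if b then 1 else -s') else 0)" for j b
  have k0: "0 < k" and kk: "k - 1 \<noteq> 0" using k2 by auto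
  have S: "(\<Sum>j'<k. p j' * w j' True + q j' * w j' False) = 0"
  proof -
    have "(\<Sum>j'<k. p j' * w j' True + q j' * w j' False) =
      (p 0 * w 0 True + q 0 * w 0 False) + (p (k-1) * w (k-1) True + q (k-1) * w (k-1) False)"
      by (rule sum2) (simp add: w_def)
    also have "\<dots> = 0" using kk by (simp add: w_def p0 q0 pk qk pk' qk')
    finally show ?thesis .
  qed
  show ?thesis unfolding isev_def
  proof (intro exI conjI ballI)
    show "\<exists>y\<in>VB. w (fst y) (fst (snd y)) \<noteq> 0"
      using k0 c2 by (intro bexI[of _ "(0,False,0)"]) (auto simp: w_def memV sz_def q0)
  next
    fix y assume y: "y \<in> VB"
    obtain j b i where yy: "y = (j,b,i)" by (cases y) auto
    have "(\<Sum>z\<in>{z\<in>VB. RB y z}. w (fst z) (fst (snd z))) = - w j b - sz j (\<not>b) * w j (\<not>b)"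
      using sum_nbr_const[of j b i w] y yy S by simp
    also have "\<dots> = (s' - 1) * w j b"
      using kk s' by (cases b) (auto simp: w_def sz_def p0 q0 pk qk pk' qk' power2_eq_square algebra_simps)
    finally show "(\<Sum>z\<in>{z\<in>VB. RB y z}. w (fst z) (fst (snd z))) = (s' - 1) * w (fst y) (fst (snd y))"
      using yy by simp
  qed
qed

lemma ev_root:
  fixes \<mu> :: real
  assumes rt: "\<mu>^2 - real NB*\<mu> + (2*real k-1)*real c = 0"
  shows "isev (\<mu> - 1)"
proof -
  define w :: "nat \<Rightarrow> bool \<Rightarrow> real" where "w j b = (if b then \<mu> - q j else \<mu> - p j)" for j b
  have k0: "0 < k" using k2 by auto
  have S: "(\<Sum>j'<k. p j' * w j' True + q j' * w j' False) = real NB * \<mu> - 2 * real k * c"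
  proof -
    have "(\<Sum>j'<k. p j' * w j' True + q j' * w j' False) = (\<Sum>j'<k. (real (p j') + real (q j')) * \<mu> - 2 * c)"
      by (rule sum.cong[OF refl]) (simp add: w_def algebra_simps pqr)
    also have "\<dots> = (\<Sum>j'<k. real (p j') + real (q j')) * \<mu> - 2 * real k * c"
      by (simp add: sum_subtractf sum_distrib_right)
    also have "(\<Sum>j'<k. real (p j') + real (q j')) = real NB" by (simp add: NB_def)
    finally show ?thesis .
  qed
  show ?thesis unfolding isev_def
  proof (intro exI conjI ballI)
    show "\<exists>y\<in>VB. w (fst y) (fst (snd y)) \<noteq> 0"
    proof (cases "\<mu> = c")
      case True
      then show ?thesis using k0 c2 by (intro bexI[of _ "(0,False,0)"]) (auto simp: w_def memV sz_def q0 p0)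
    next
      case False
      then show ?thesis using k0 c2 by (intro bexI[of _ "(0,True,0)"]) (auto simp: w_def memV sz_def q0 p0)
    qed
  next
    fix y assume y: "y \<in> VB"
    obtain j b i where yy: "y = (j,b,i)" by (cases y) auto
    have j: "j < k" using y yy by (simp add: memV)
    have pj: "real (p j) * real (q j) = c" using pqr[OF j] .
    have "(\<Sum>z\<in>{z\<in>VB. RB y z}. w (fst z) (fst (snd z))) = real NB * \<mu> - 2 * real k * c - w j b - sz j (\<not>b) * w j (\<not>b)"
      using sum_nbr_const[of j b i w] y yy S by simp
    also have "\<dots> = (\<mu> - 1) * w j b"
    proof (cases b)
      case True
      have "real NB * \<mu> - 2 * real k * c - (\<mu> - q j) - q j * (\<mu> - p j) = (\<mu> - 1) * (\<mu> - q j)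
         + (real NB * \<mu> - (2*real k - 1) * c - \<mu>^2) + (real (p j) * real (q j) - real c)"
        by (simp add: algebra_simps power2_eq_square)
      then show ?thesis using True rt pj by (simp add: w_def sz_def algebra_simps)
    next
      case False
      have "real NB * \<mu> - 2 * real k * c - (\<mu> - p j) - p j * (\<mu> - q j) = (\<mu> - 1) * (\<mu> - p j)
         + (real NB * \<mu> - (2*real k - 1) * c - \<mu>^2) + (real (p j) * real (q j) - real c)"
        by (simp add: algebra_simps power2_eq_square)
      then show ?thesis using False rt pj by (simp add: w_def sz_def algebra_simps)
    qed
    finally show "(\<Sum>z\<in>{z\<in>VB. RB y z}. w (fst z) (fst (snd z))) = (\<mu> - 1) * w (fst y) (fst (snd y))"
      using yy by simp
  qed
qed

lemma spec_iff: "isev lam \<longleftrightarrow> (lam = -1 \<or> (lam+1)^2 = real c \<or> (lam+1)^2 - real NB*(lam+1) + (2*real k-1)*real c = 0)"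
proof
  assume "isev lam"
  then show "lam = -1 \<or> (lam+1)^2 = real c \<or> (lam+1)^2 - real NB*(lam+1) + (2*real k-1)*real c = 0"
    unfolding isev_def using upper by blast
next
  assume "lam = -1 \<or> (lam+1)^2 = real c \<or> (lam+1)^2 - real NB*(lam+1) + (2*real k-1)*real c = 0"
  then show "isev lam"
  proof (elim disjE)
    assume "lam = -1" then show ?thesis using ev_m1 by simp
  next
    assume "(lam+1)^2 = real c" then show ?thesis using ev_pm[of "lam+1"] by simp
  next
    assume "(lam+1)^2 - real NB*(lam+1) + (2*real k-1)*real c = 0"
    then show ?thesis using ev_root[of "lam+1"] by simp
  qed
qed

lemma card5: "card {lam::real. lam = -1 \<or> (lam+1)^2 = real c \<or> (lam+1)^2 - real NB*(lam+1) + (2*real k-1)*real c = 0} = 5"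
proof -
  define s where "s = sqrt (real c)"
  have s0: "s > 0" using c2 by (simp add: s_def)
  have ss: "s^2 = real c" by (simp add: s_def)
  have each: "2*s \<le> real (p j) + real (q j)" if j: "j < k" for j
  proof (rule power2_le_imp_le)
    have "(2*s)^2 = 4 * (real (p j) * real (q j))" using ss pqr[OF j] by (simp add: power2_eq_square)
    also have "\<dots> \<le> (real (p j) + real (q j))^2"
      using sum_squares_ge_zero[of "real (p j) - real (q j)" 0] by (simp add: power2_eq_square algebra_simps)
    finally show "(2*s)^2 \<le> (real (p j) + real (q j))^2" .
  qed simp
  have strict0: "2*s < real (p 0) + real (q 0)"
  proof (rule power2_less_imp_less)
    have "(2*s)^2 = 4 * real c" using ss by (simp add: power2_eq_square)
    also have "\<dots> < (1 + real c)^2"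
    proof -
      have "0 < (real c - 1)^2" using c2 by simp
      then show ?thesis by (simp add: power2_eq_square algebra_simps)
    qed
    finally show "(2*s)^2 < (real (p 0) + real (q 0))^2" by (simp add: p0 q0)
  qed simp
  have NBgt: "real NB > 2 * real k * s"
  proof -
    have "(\<Sum>j<k. 2*s) < (\<Sum>j<k. real (p j) + real (q j))"
      by (rule sum_strict_mono_ex1) (use each strict0 k2 in auto)
    then show ?thesis by (simp add: NB_def)
  qed
  define F where "F m = m^2 - real NB*m + (2*real k-1)*real c" for m :: real
  have Fs: "F s < 0"
  proof -
    have "F s = s * (2 * real k * s - real NB)" using ss by (simp add: F_def power2_eq_square algebra_simps)
    also have "\<dots> < 0" using s0 NBgt by (simp add: mult_pos_neg)
    finally show ?thesis .
  qed
  define D where "D = (real NB)^2 - 4*((2*real k-1)*real c)"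
  have F4: "4 * F m = (2*m - real NB)^2 - D" for m by (simp add: F_def D_def power2_eq_square algebra_simps)
  have Dgt: "(2*s - real NB)^2 < D" using F4[of s] Fs by simp
  have Dpos: "D > 0" using Dgt by (smt (verit) zero_le_power2)
  define r where "r = sqrt D"
  have r0: "r > 0" using Dpos by (simp add: r_def)
  have rr: "r^2 = D" using Dpos by (simp add: r_def)
  define m1 where "m1 = (real NB - r)/2"
  define m2 where "m2 = (real NB + r)/2"
  have roots: "F m = 0 \<longleftrightarrow> m = m1 \<or> m = m2" for m
  proof -
    have "F m = 0 \<longleftrightarrow> (2*m - real NB)^2 = r^2" using F4[of m] rr by auto
    also have "\<dots> \<longleftrightarrow> 2*m - real NB = r \<or> 2*m - real NB = -r" by (rule power2_eq_iff)
    also have "\<dots> \<longleftrightarrow> m = m1 \<or> m = m2" by (auto simp: m1_def m2_def)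
    finally show ?thesis .
  qed
  have abs1: "\<bar>2*s - real NB\<bar> < r"
    by (rule power2_less_imp_less) (use Dgt rr r0 in auto)
  have ord1: "m1 < s" "s < m2" using abs1 by (auto simp: m1_def m2_def)
  have F0: "F 0 > 0" using c2 k2 by (simp add: F_def)
  have "r^2 < (real NB)^2" using F4[of 0] F0 rr by simp
  then have "r < real NB" by (rule power2_less_imp_less) simp
  then have m1p: "m1 > 0" by (simp add: m1_def)
  have cs: "(lam+1)^2 = real c \<longleftrightarrow> lam + 1 = s \<or> lam + 1 = -s" for lam :: real
    using power2_eq_iff[of "lam+1" s] ss by simp
  have "{lam::real. lam = -1 \<or> (lam+1)^2 = real c \<or> (lam+1)^2 - real NB*(lam+1) + (2*real k-1)*real c = 0}
     = {-s-1, -1, m1-1, s-1, m2-1}"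
  proof -
    have "\<And>lam. (lam+1)^2 - real NB*(lam+1) + (2*real k-1)*real c = 0 \<longleftrightarrow> F (lam+1) = 0" by (simp add: F_def)
    then show ?thesis using cs roots by (auto simp: algebra_simps)
  qed
  moreover have "card {-s-1, -1, m1-1, s-1, m2-1} = 5"
    using s0 ord1 m1p by simp
  ultimately show ?thesis by simp
qed

lemma valB: "(\<lambda>y. card {z\<in>VB. RB y z}) ` VB = (\<lambda>j. NB - 1 - q j) ` {..<k} \<union> (\<lambda>j. NB - 1 - p j) ` {..<k}"
proof
  show "(\<lambda>y. card {z\<in>VB. RB y z}) ` VB \<subseteq> (\<lambda>j. NB - 1 - q j) ` {..<k} \<union> (\<lambda>j. NB - 1 - p j) ` {..<k}"
  proof
    fix x assume "x \<in> (\<lambda>y. card {z\<in>VB. RB y z}) ` VB"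
    then obtain j b i where y: "(j,b,i) \<in> VB" and x: "x = card {z\<in>VB. RB (j,b,i) z}" by auto
    then have j: "j < k" by (simp add: memV)
    show "x \<in> (\<lambda>j. NB - 1 - q j) ` {..<k} \<union> (\<lambda>j. NB - 1 - p j) ` {..<k}"
      using card_nbr[OF y] x j by (cases b) (auto simp: sz_def)
  qed
next
  show "(\<lambda>j. NB - 1 - q j) ` {..<k} \<union> (\<lambda>j. NB - 1 - p j) ` {..<k} \<subseteq> (\<lambda>y. card {z\<in>VB. RB y z}) ` VB"
  proof
    fix x assume "x \<in> (\<lambda>j. NB - 1 - q j) ` {..<k} \<union> (\<lambda>j. NB - 1 - p j) ` {..<k}"
    then obtain j where j: "j < k" and x: "x = NB - 1 - q j \<or> x = NB - 1 - p j" by auto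
    have y1: "(j,True,0) \<in> VB" and y2: "(j,False,0) \<in> VB" using pos[OF j] j by (auto simp: memV sz_def)
    from x show "x \<in> (\<lambda>y. card {z\<in>VB. RB y z}) ` VB"
    proof
      assume "x = NB - 1 - q j" then show ?thesis
        using card_nbr[OF y1] y1 by (intro image_eqI[where x="(j,True,0)"]) (auto simp: sz_def)
    next
      assume "x = NB - 1 - p j" then show ?thesis
        using card_nbr[OF y2] y2 by (intro image_eqI[where x="(j,False,0)"]) (auto simp: sz_def)
    qed
  qed
qed

lemma mainB: "\<exists>n E. simple_graph n E \<and> connected_graph n E \<and> \<not> bipartite n E \<and>
   card (graph_eigenvalues n E) = 5 \<and> valencies n E = (\<lambda>j. NB - 1 - q j) ` {..<k} \<union> (\<lambda>j. NB - 1 - p j) ` {..<k}"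
proof -
  obtain g where bij: "bij_betw g {0..<card VB} VB" using ex_bij_betw_nat_finite[OF finV] by blast
  define n where "n = card VB"
  have bij': "bij_betw g {0..<n} VB" using bij by (simp add: n_def)
  have k0: "0 < k" "1 < k" using k2 by auto
  have in1: "(0,True,0) \<in> VB" "(0,False,0) \<in> VB" "(0,False,1) \<in> VB" "(1,True,0) \<in> VB"
    using k0 pos[of 1] c2 by (auto simp: memV sz_def p0 q0)
  have npos: "n > 0" unfolding n_def using in1 finV by (auto simp: card_gt_0_iff)
  show ?thesis
  proof (intro exI conjI)
    show "simple_graph n (Eof n g RB)" by (rule simple_Eof) (auto simp: RB_def)
    show "connected_graph n (Eof n g RB)"
    proof (rule conn_Eof[OF bij' npos])
      fix y z assume y: "y \<in> VB" and z: "z \<in> VB" and yz: "y \<noteq> z"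
      show "RB y z \<or> (\<exists>w\<in>VB. RB y w \<and> RB w z)"
      proof (cases "fst y = fst z")
        case False then show ?thesis using yz by (simp add: RB_def)
      next
        case True
        define w where "w = (if fst y = 0 then 1 else 0::nat, True, 0::nat)"
        have "w \<in> VB" using in1 by (simp add: w_def)
        moreover have "RB y w" "RB w z" using True by (auto simp: RB_def w_def)
        ultimately show ?thesis by blast
      qed
    qed
    show "\<not> bipartite n (Eof n g RB)"
      by (rule nonbip_Eof[OF bij', of "(0,False,0)" "(0,False,1)" "(1,True,0)"]) (use in1 in \<open>auto simp: RB_def\<close>)
    have "graph_eigenvalues n (Eof n g RB) = {lam. isev lam}"
      unfolding graph_eigenvalues_def isev_def using eig_char[OF bij'] by blast
    also have "\<dots> = {lam::real. lam = -1 \<or> (lam+1)^2 = real c \<or> (lam+1)^2 - real NB*(lam+1) + (2*real k-1)*real c = 0}"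
      using spec_iff by blast
    finally show "card (graph_eigenvalues n (Eof n g RB)) = 5" using card5 by simp
    show "valencies n (Eof n g RB) = (\<lambda>j. NB - 1 - q j) ` {..<k} \<union> (\<lambda>j. NB - 1 - p j) ` {..<k}"
      using val_Eof[OF bij'] valB by simp
  qed
qed

end


definition cl7 :: "nat \<Rightarrow> nat" where "cl7 u = (if u < 2 then 0 else if u < 4 then 1 else u)"
definition R7 :: "nat \<Rightarrow> nat \<Rightarrow> bool" where
  "R7 u v \<longleftrightarrow> u \<noteq> v \<and> ((u < 4) = (v < 4) \<longrightarrow> cl7 u = cl7 v)"

lemma sum7: "(\<Sum>z\<in>{z\<in>{0..<7::nat}. P z}. f z) =
  (if P 0 then f 0 else 0) + (if P 1 then f 1 else 0) + (if P 2 then f 2 else 0) + (if P 3 then f 3 else 0)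
  + (if P 4 then f 4 else 0) + (if P 5 then f 5 else 0) + (if P 6 then f 6 else (0::'a::comm_monoid_add))"
proof -
  have "(\<Sum>z\<in>{z\<in>{0..<7::nat}. P z}. f z) = (\<Sum>z\<in>{0..<7}. if P z then f z else 0)"
    by (rule sum.inter_filter) simp
  also have "\<dots> = (if P 0 then f 0 else 0) + (if P 1 then f 1 else 0) + (if P 2 then f 2 else 0) + (if P 3 then f 3 else 0)
  + (if P 4 then f 4 else 0) + (if P 5 then f 5 else 0) + (if P 6 then f 6 else (0::'a::comm_monoid_add))"
    by (simp add: atLeast0LessThan lessThan_nat_numeral add.assoc add.left_commute add.commute)
  finally show ?thesis .
qed

lemma card7: "card {z\<in>{0..<7::nat}. P z} = (\<Sum>z\<in>{z\<in>{0..<7::nat}. P z}. 1)" by simp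

lemma deg7: "y < 7 \<Longrightarrow> card {z\<in>{0..<7::nat}. R7 y z} = 4"
  unfolding card7 sum7 by (simp add: R7_def cl7_def less_Suc_eq numeral_eq_Suc) 


lemma upper7:
  fixes f :: "nat \<Rightarrow> real"
  assumes nz: "\<exists>y\<in>{0..<7::nat}. f y \<noteq> 0" and eq: "\<forall>y\<in>{0..<7::nat}. (\<Sum>z\<in>{z\<in>{0..<7}. R7 y z}. f z) = lam * f y"
  shows "lam \<in> {-1, 0, 1, 4, -3}"
proof (rule ccontr)
  assume H: "lam \<notin> {-1, 0, 1, 4, -3}"
  have e0: "f 1 + f 4 + f 5 + f 6 = lam * f 0" using eq[rule_format, of 0, unfolded sum7] by (simp add: R7_def cl7_def)
  have e1: "f 0 + f 4 + f 5 + f 6 = lam * f 1" using eq[rule_format, of 1, unfolded sum7] by (simp add: R7_def cl7_def)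
  have e2: "f 3 + f 4 + f 5 + f 6 = lam * f 2" using eq[rule_format, of 2, unfolded sum7] by (simp add: R7_def cl7_def)
  have e3: "f 2 + f 4 + f 5 + f 6 = lam * f 3" using eq[rule_format, of 3, unfolded sum7] by (simp add: R7_def cl7_def)
  have e4: "f 0 + f 1 + f 2 + f 3 = lam * f 4" using eq[rule_format, of 4, unfolded sum7] by (simp add: R7_def cl7_def)
  have e5: "f 0 + f 1 + f 2 + f 3 = lam * f 5" using eq[rule_format, of 5, unfolded sum7] by (simp add: R7_def cl7_def)
  have e6: "f 0 + f 1 + f 2 + f 3 = lam * f 6" using eq[rule_format, of 6, unfolded sum7] by (simp add: R7_def cl7_def)
  have l1: "lam + 1 \<noteq> 0" and l0: "lam \<noteq> 0" and l2: "lam - 1 \<noteq> 0" and l4: "lam - 4 \<noteq> 0" and l5: "lam + 3 \<noteq> 0"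
    using H by auto
  have "lam^2 - lam - 12 = (lam - 4) * (lam + 3)" by (simp add: power2_eq_square algebra_simps)
  then have l3: "lam^2 - lam - 12 \<noteq> 0" using l4 l5 by simp
  have "(lam + 1) * (f 0 - f 1) = 0" using e0 e1 by (simp add: algebra_simps)
  then have v01: "f 1 = f 0" using l1 by simp
  have "(lam + 1) * (f 2 - f 3) = 0" using e2 e3 by (simp add: algebra_simps)
  then have v23: "f 3 = f 2" using l1 by simp
  have "lam * f 5 = lam * f 4" "lam * f 6 = lam * f 4" using e4 e5 e6 by linarith+
  then have v45: "f 5 = f 4" and v46: "f 6 = f 4" using l0 by simp_all
  have "(lam - 1) * (f 0 - f 2) = 0" using e0 e2 v01 v23 v45 v46 by (simp add: algebra_simps)
  then have v02: "f 2 = f 0" using l2 by simp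
  have a: "(lam - 1) * f 0 = 3 * f 4" using e0 v01 v45 v46 by (simp add: algebra_simps)
  have b: "lam * f 4 = 4 * f 0" using e4 v01 v23 v02 by (simp add: algebra_simps)
  have "(lam^2 - lam - 12) * f 0 = lam * ((lam - 1) * f 0) - 3 * (4 * f 0)" by (simp add: power2_eq_square algebra_simps)
  also have "\<dots> = 0" using a b by (simp add: algebra_simps)
  finally have f0: "f 0 = 0" using l3 by simp
  then have f4: "f 4 = 0" using b l0 by simp
  have "\<forall>y\<in>{0..<7::nat}. f y = 0"
  proof
    fix y :: nat assume "y \<in> {0..<7}"
    then have "y = 0 \<or> y = 1 \<or> y = 2 \<or> y = 3 \<or> y = 4 \<or> y = 5 \<or> y = 6" by auto
    then show "f y = 0" using f0 f4 v01 v23 v02 v45 v46 by auto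
  qed
  then show False using nz by blast
qed

lemma ev7: fixes lam :: real shows "(\<exists>f. (\<exists>y\<in>{0..<7::nat}. f y \<noteq> 0) \<and> (\<forall>y\<in>{0..<7::nat}. (\<Sum>z\<in>{z\<in>{0..<7}. R7 y z}. f z) = lam * f y))
   \<longleftrightarrow> lam \<in> {-1, 0, 1, 4, -3}"
proof
  assume "\<exists>f. (\<exists>y\<in>{0..<7::nat}. f y \<noteq> 0) \<and> (\<forall>y\<in>{0..<7::nat}. (\<Sum>z\<in>{z\<in>{0..<7}. R7 y z}. f z) = lam * f y)"
  then show "lam \<in> {-1, 0, 1, 4, -3}" using upper7 by blast
next
  have all7: "\<And>P. (\<forall>y\<in>{0..<7::nat}. P y) \<longleftrightarrow> P 0 \<and> P 1 \<and> P 2 \<and> P 3 \<and> P 4 \<and> P 5 \<and> P 6"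
    by (auto simp: less_Suc_eq numeral_eq_Suc)
  assume "lam \<in> {-1, 0, 1, 4, -3}"
  then consider "lam = -1" | "lam = 0" | "lam = 1" | "lam = 4" | "lam = -3" by auto
  then show "\<exists>f. (\<exists>y\<in>{0..<7::nat}. f y \<noteq> 0) \<and> (\<forall>y\<in>{0..<7::nat}. (\<Sum>z\<in>{z\<in>{0..<7}. R7 y z}. f z) = lam * f y)"
  proof cases
    case 1
    show ?thesis
      by (rule exI[of _ "\<lambda>z. if z = 0 then 1 else if z = 1 then -1 else 0"], intro conjI bexI[of _ 0]) (simp_all only: all7 sum7, simp_all add: 1 R7_def cl7_def)
  next
    case 2
    show ?thesis
      by (rule exI[of _ "\<lambda>z. if z = 4 then 1 else if z = 5 then -1 else 0"], intro conjI bexI[of _ 4]) (simp_all only: all7 sum7, simp_all add: 2 R7_def cl7_def)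
  next
    case 3
    show ?thesis
      by (rule exI[of _ "\<lambda>z. if z < 2 then 1 else if z < 4 then -1 else 0"], intro conjI bexI[of _ 0]) (simp_all only: all7 sum7, simp_all add: 3 R7_def cl7_def)
  next
    case 4
    show ?thesis
      by (rule exI[of _ "\<lambda>z. 1"], intro conjI bexI[of _ 0]) (simp_all only: all7 sum7, simp_all add: 4 R7_def cl7_def)
  next
    case 5
    show ?thesis
      by (rule exI[of _ "\<lambda>z. if z < 4 then 3 else -4"], intro conjI bexI[of _ 0]) (simp_all only: all7 sum7, simp_all add: 5 R7_def cl7_def)
  qed
qed


lemma caseA: "\<exists>n E. simple_graph n E \<and> connected_graph n E \<and> \<not> bipartite n E \<and>
           card (graph_eigenvalues n E) = 5 \<and> card (valencies n E) = 1"
proof (intro exI conjI)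
  have bij: "bij_betw id {0..<7::nat} {0..<7}" by (rule bij_betw_id)
  show "simple_graph 7 (Eof 7 id R7)" by (rule simple_Eof) (auto simp: R7_def)
  show "connected_graph 7 (Eof 7 id R7)"
  proof (rule conn_Eof[OF bij])
    fix y z :: nat assume y: "y \<in> {0..<7}" and z: "z \<in> {0..<7}" and yz: "y \<noteq> z"
    show "R7 y z \<or> (\<exists>w\<in>{0..<7}. R7 y w \<and> R7 w z)"
    proof (cases "(y < 4) = (z < 4)")
      case False then show ?thesis using yz by (simp add: R7_def)
    next
      case True
      define w where "w = (if y < 4 then 4 else 0::nat)"
      have "w \<in> {0..<7}" by (simp add: w_def)
      moreover have "R7 y w" "R7 w z" using True by (auto simp: R7_def w_def)
      ultimately show ?thesis by blast
    qed
  qed simp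
  show "\<not> bipartite 7 (Eof 7 id R7)"
    by (rule nonbip_Eof[OF bij, of 0 1 4]) (auto simp: R7_def cl7_def)
  have "graph_eigenvalues 7 (Eof 7 id R7) = {-1, 0, 1, 4, -3}"
    unfolding graph_eigenvalues_def eig_char[OF bij] ev7 by auto
  then show "card (graph_eigenvalues 7 (Eof 7 id R7)) = 5" by simp
  have "valencies 7 (Eof 7 id R7) = {4}"
  proof -
    have "(\<lambda>y. card {z\<in>{0..<7::nat}. R7 y z}) ` {0..<7} = (\<lambda>y. 4) ` {0..<7::nat}"
      by (rule image_cong[OF refl], rule deg7) simp
    also have "\<dots> = {4}" by (auto intro: image_eqI[where x=0])
    finally show ?thesis unfolding val_Eof[OF bij] .
  qed
  then show "card (valencies 7 (Eof 7 id R7)) = 1" by simp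
qed

lemma caseB:
  assumes t: "t \<ge> 2"
  shows "\<exists>n E. simple_graph n E \<and> connected_graph n E \<and> \<not> bipartite n E \<and>
           card (graph_eigenvalues n E) = 5 \<and> card (valencies n E) = t"
proof -
  interpret B: famB t "\<lambda>j. 2^j" "\<lambda>j. 2^(t-1-j)" "2^(t-1)"
  proof
    show "2 \<le> t" by (rule t)
    fix j assume "j < t"
    then have "j + (t-1-j) = t-1" by simp
    then show "(2::nat)^j * 2^(t-1-j) = 2^(t-1)" by (metis power_add)
  next
    show "(2::nat)^0 = 1" by simp
    show "(2::nat)^(t-1-0) = 2^(t-1)" by simp
    show "(2::nat)^(t-1) = 2^(t-1)" by simp
    show "(2::nat)^(t-1-(t-1)) = 1" by simp
    have "(2::nat)^1 \<le> 2^(t-1)" using t by (intro power_increasing) auto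
    then show "2 \<le> (2::nat)^(t-1)" by simp
  qed
  obtain n E where G: "simple_graph n E" "connected_graph n E" "\<not> bipartite n E" "card (graph_eigenvalues n E) = 5"
    and V: "valencies n E = (\<lambda>j. B.NB - 1 - 2^(t-1-j)) ` {..<t} \<union> (\<lambda>j. B.NB - 1 - 2^j) ` {..<t}"
    using B.mainB by blast
  have img: "(\<lambda>j. t-1-j) ` {..<t} = {..<t}"
  proof
    show "(\<lambda>j. t-1-j) ` {..<t} \<subseteq> {..<t}" using t by auto
    show "{..<t} \<subseteq> (\<lambda>j. t-1-j) ` {..<t}"
    proof
      fix i assume "i \<in> {..<t}"
      then have "i = t-1-(t-1-i)" "t-1-i \<in> {..<t}" by auto
      then show "i \<in> (\<lambda>j. t-1-j) ` {..<t}" by blast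
    qed
  qed
  have "(\<lambda>j. B.NB - 1 - 2^(t-1-j)) ` {..<t} = (\<lambda>i. B.NB - 1 - 2^i) ` ((\<lambda>j. t-1-j) ` {..<t})"
    by (simp add: image_image)
  then have V': "valencies n E = (\<lambda>i. B.NB - 1 - 2^i) ` {..<t}" using V img by simp
  have NBge: "2^(t-1) + 1 \<le> B.NB"
  proof -
    have "(\<lambda>j. 2^j + 2^(t-1-j)) (t-1) \<le> (\<Sum>j<t. (2::nat)^j + 2^(t-1-j))"
      by (rule member_le_sum) (use t in auto)
    then show ?thesis unfolding B.NB_def by simp
  qed
  have inj: "inj_on (\<lambda>i. B.NB - 1 - 2^i) {..<t}"
  proof (rule inj_onI)
    fix i j assume i: "i \<in> {..<t}" and j: "j \<in> {..<t}" and eq: "B.NB - 1 - 2^i = B.NB - 1 - (2::nat)^j"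
    have "(2::nat)^i \<le> 2^(t-1)" "(2::nat)^j \<le> 2^(t-1)" using i j by (auto intro: power_increasing)
    then have "(2::nat)^i = 2^j" using eq NBge by linarith
    then show "i = j" by simp
  qed
  have "card (valencies n E) = t" unfolding V' using card_image[OF inj] by simp
  then show ?thesis using G by blast
qed

theorem theorem3:
  fixes t :: nat
  assumes "t \<ge> 1"
  shows "\<exists>n E. simple_graph n E \<and> connected_graph n E \<and> \<not> bipartite n E \<and>
           card (graph_eigenvalues n E) = 5 \<and> card (valencies n E) = t"
proof (cases "t = 1")
  case True then show ?thesis using caseA by simp
next
  case False then show ?thesis using assms caseB by simp
qed

end
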